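(* Consider an $n$-player team problem with common cost $c$ and compact action spaces, satisfying Assumptions A2, A4 and A6 with fixed channels $Q^1,\dots,Q^n$. For a prior $\zeta$ let $\mu_\zeta(dx,dy^1,\dots,dy^n)=\zeta(dx)\prod_{i=1}^nQ^i(dy^i|x)$, and suppose $\mu_\zeta$ satisfies Assumption A3 for each prior considered. If $\zeta_m\to\zeta$ weakly in $\mathcal{P}(\mathbb{X})$, then $J^*(c,\mu_{\zeta_m})\to J^*(c,\mu_\zeta)$; i.e. the team value function is continuous under weak convergence of the priors.
   Context: $\mathbb{X},\mathbb{Y}^1,\dots,\mathbb{Y}^n$ are standard Borel spaces; $Q^i$ is a stochastic kernel from $\mathbb{X}$ to $\mathbb{Y}^i$. A team problem consists of standard Borel action spaces $\mathbb{U}^i$ and a common cost $c:\mathbb{X}\times\mathbb{U}^1\times\cdots\times\mathbb{U}^n\to\mathbb{R}$. Policies are measurable $\gamma^i:\mathbb{Y}^i\to\mathbb{U}^i$; for an information structure $\mu$ on $\mathbb{X}\times\mathbb{Y}^1\times\cdots\times\mathbb{Y}^n$ and team policy $\bar\gamma$, $J(c,\mu,\bar\gamma)=\int c(x,\gamma^1(y^1),\dots,\gamma^n(y^n))\,d\mu$, and $J^*(c,\mu)=\inf_{\bar\gamma}J(c,\mu,\bar\gamma)$. Weak convergence: $\int f d\zeta_m\to\int f d\zeta$ for all bounded continuous $f$. $\|P-R\|_{TV}=2\sup_B|P(B)-R(B)|$. Assumptions: A2: the cost is continuous and bounded. A3: $\mu_\zeta\ll\zeta(dx)\bar Q^1(dy^1)\cdots\bar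 Q^n(dy^n)$ for some probability measures $\bar Q^i$ on $\mathbb{Y}^i$. A4: each action space is compact. A6: the channels $Q^i$ are fixed and conditionally independent given $x$, and each is continuous in total variation: $x_m\to x$ implies $\|Q^i(\cdot|x_m)-Q^i(\cdot|x)\|_{TV}\to0$. *)

theory Defs
  imports "HOL-Probability.Probability"
begin

text \<open>Observations y = (y^1,...,y^n) are represented as elements of the finite
  product PiE {..<n} (\<lambda>_. UNIV); actions likewise as elements of PiE {..<n} U.\<close>

definition obs_space :: "nat \<Rightarrow> (nat \<Rightarrow> 'y::topological_space) measure" where
  "obs_space n = PiM {..<n} (\<lambda>_. borel)"

definition info_struct ::
  "nat \<Rightarrow> (nat \<Rightarrow> 'x \<Rightarrow> 'y measure) \<Rightarrow> 'x measure \<Rightarrow> ('x \<times> (nat \<Rightarrow> 'y::topological_space)) measure" where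
  "info_struct n Q \<zeta> =
     \<zeta> \<bind> (\<lambda>x. distr (PiM {..<n} (\<lambda>i. Q i x)) (\<zeta> \<Otimes>\<^sub>M obs_space n) (\<lambda>y. (x, y)))"

definition team_policies ::
  "nat \<Rightarrow> (nat \<Rightarrow> 'u::topological_space set) \<Rightarrow> (nat \<Rightarrow> 'y::topological_space \<Rightarrow> 'u) set" where
  "team_policies n U = {\<gamma>. \<forall>i<n. \<gamma> i \<in> borel \<rightarrow>\<^sub>M borel \<and> (\<forall>y. \<gamma> i y \<in> U i)}"

definition team_cost ::
  "nat \<Rightarrow> ('x \<Rightarrow> (nat \<Rightarrow> 'u) \<Rightarrow> real) \<Rightarrow> ('x \<times> (nat \<Rightarrow> 'y)) measure
     \<Rightarrow> (nat \<Rightarrow> 'y \<Rightarrow> 'u) \<Rightarrow> real" where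
  "team_cost n c \<mu> \<gamma> = (\<integral>p. c (fst p) (\<lambda>i\<in>{..<n}. \<gamma> i (snd p i)) \<partial>\<mu>)"

definition team_value ::
  "nat \<Rightarrow> (nat \<Rightarrow> 'u::topological_space set) \<Rightarrow> ('x \<Rightarrow> (nat \<Rightarrow> 'u) \<Rightarrow> real)
     \<Rightarrow> ('x \<times> (nat \<Rightarrow> 'y::topological_space)) measure \<Rightarrow> real" where
  "team_value n U c \<mu> = (INF \<gamma>\<in>team_policies n U. team_cost n c \<mu> \<gamma>)"

definition tv_dist :: "'a measure \<Rightarrow> 'a measure \<Rightarrow> real" where
  "tv_dist P R = 2 * (SUP B\<in>sets P. \<bar>measure P B - measure R B\<bar>)"

definition weak_conv_seq :: "(nat \<Rightarrow> 'x::topological_space measure) \<Rightarrow> 'x measure \<Rightarrow> bool" where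
  "weak_conv_seq \<zeta>s \<zeta> \<longleftrightarrow>
     (\<forall>f::'x \<Rightarrow> real. continuous_on UNIV f \<and> bounded (range f) \<longrightarrow>
        (\<lambda>m. \<integral>x. f x \<partial>(\<zeta>s m)) \<longlonglongrightarrow> (\<integral>x. f x \<partial>\<zeta>))"

definition assumption_A3 ::
  "nat \<Rightarrow> (nat \<Rightarrow> 'x \<Rightarrow> 'y::topological_space measure) \<Rightarrow> 'x measure \<Rightarrow> bool" where
  "assumption_A3 n Q \<zeta> \<longleftrightarrow>
     (\<exists>Qb::nat \<Rightarrow> 'y measure.
        (\<forall>i<n. prob_space (Qb i) \<and> sets (Qb i) = sets borel) \<and>
        absolutely_continuous (\<zeta> \<Otimes>\<^sub>M PiM {..<n} Qb) (info_struct n Q \<zeta>))"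

end

theory Submission
  imports Defs
begin

lemma int_mono_on_set:
  fixes h :: "'a \<Rightarrow> real"
  assumes P: "finite_measure P" and R: "finite_measure R" and sR: "sets R = sets P"
    and Y: "Y \<in> sets P" and le: "\<forall>X\<in>sets P. X \<subseteq> Y \<longrightarrow> emeasure R X \<le> emeasure P X"
    and h: "h \<in> borel_measurable P" and hb: "\<forall>x\<in>space P. 0 \<le> h x \<and> h x \<le> C"
  shows "(\<integral>x. h x * indicator Y x \<partial>R) \<le> (\<integral>x. h x * indicator Y x \<partial>P)"
proof -
  interpret P: finite_measure P by fact
  interpret R: finite_measure R by fact
  have spR: "space R = space P" using sR sets_eq_imp_space_eq by blast
  have hR: "h \<in> borel_measurable R" using h sR measurable_cong_sets by blast
  have YR: "Y \<in> sets R" using Y sR by simp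
  have iP: "integrable P (\<lambda>x. h x * indicator Y x)"
    proof (rule P.integrable_const_bound[where B="abs C"])
    show "AE x in P. norm (h x * indicator Y x) \<le> abs C" using hb by (fastforce simp: indicator_def intro!: AE_I2)
    show "(\<lambda>x. h x * indicator Y x) \<in> borel_measurable P" using h Y by measurable
  qed
  have iR: "integrable R (\<lambda>x. h x * indicator Y x)"
    proof (rule R.integrable_const_bound[where B="abs C"])
    show "AE x in R. norm (h x * indicator Y x) \<le> abs C" using hb spR by (fastforce simp: indicator_def intro!: AE_I2)
    show "(\<lambda>x. h x * indicator Y x) \<in> borel_measurable R" using hR YR by measurable
  qed
  let ?M1 = "density R (indicator Y)" and ?M2 = "density P (indicator Y)"
  have s12: "sets ?M1 = sets ?M2" using sR by simp
  have le12: "?M1 \<le> ?M2"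
  proof -
    have "emeasure ?M1 A \<le> emeasure ?M2 A" for A
    proof (cases "A \<in> sets P")
      case True
      have "emeasure ?M1 A = (\<integral>\<^sup>+x. indicator Y x * indicator A x \<partial>R)"
        using True Y sR by (subst emeasure_density) auto
      also have "\<dots> = (\<integral>\<^sup>+x. indicator (A \<inter> Y) x \<partial>R)"
        by (intro nn_integral_cong) (auto simp: indicator_def)
      also have "\<dots> = emeasure R (A \<inter> Y)" using True YR sR by (intro nn_integral_indicator) auto
      also have "\<dots> \<le> emeasure P (A \<inter> Y)" using le True Y by auto
      also have "\<dots> = (\<integral>\<^sup>+x. indicator (A \<inter> Y) x \<partial>P)" using True Y by (intro nn_integral_indicator[symmetric]) auto
      also have "\<dots> = (\<integral>\<^sup>+x. indicator Y x * indicator A x \<partial>P)"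
        by (intro nn_integral_cong) (auto simp: indicator_def)
      also have "\<dots> = emeasure ?M2 A"
        using True Y by (subst emeasure_density) auto
      finally show ?thesis .
    next
      case False then show ?thesis using sR by (simp add: emeasure_notin_sets)
    qed
    then show ?thesis using s12 sR spR by (simp add: le_measure_iff le_fun_def)
  qed
  have "(\<integral>\<^sup>+x. ennreal (h x) \<partial>?M1) \<le> (\<integral>\<^sup>+x. ennreal (h x) \<partial>?M2)"
    by (rule nn_integral_mono_measure[OF s12 le12])
  also have "(\<integral>\<^sup>+x. ennreal (h x) \<partial>?M1) = (\<integral>\<^sup>+x. ennreal (h x * indicator Y x) \<partial>R)"
    using YR hR by (subst nn_integral_density) (auto intro!: nn_integral_cong simp: indicator_def)
  also have "(\<integral>\<^sup>+x. ennreal (h x) \<partial>?M2) = (\<integral>\<^sup>+x. ennreal (h x * indicator Y x) \<partial>P)"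
    using Y h by (subst nn_integral_density) (auto intro!: nn_integral_cong simp: indicator_def)
  finally have nle: "(\<integral>\<^sup>+x. ennreal (h x * indicator Y x) \<partial>R) \<le> (\<integral>\<^sup>+x. ennreal (h x * indicator Y x) \<partial>P)" .
  have fin: "(\<integral>\<^sup>+x. ennreal (h x * indicator Y x) \<partial>P) < top"
  proof -
    have "(\<integral>\<^sup>+x. ennreal (h x * indicator Y x) \<partial>P) = (\<integral>\<^sup>+x. ennreal (norm (h x * indicator Y x)) \<partial>P)"
      using hb by (intro nn_integral_cong) (auto simp: indicator_def)
    then show ?thesis using integrableD(2)[OF iP] by (simp add: top.not_eq_extremum)
  qed
  have eP: "(\<integral>x. h x * indicator Y x \<partial>P) = enn2real (\<integral>\<^sup>+x. ennreal (h x * indicator Y x) \<partial>P)"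
    using hb Y h by (intro integral_eq_nn_integral) (auto simp: indicator_def)
  have eR: "(\<integral>x. h x * indicator Y x \<partial>R) = enn2real (\<integral>\<^sup>+x. ennreal (h x * indicator Y x) \<partial>R)"
    using hb YR hR spR by (intro integral_eq_nn_integral) (auto simp: indicator_def)
  show ?thesis unfolding eP eR using nle fin by (intro enn2real_mono) auto
qed

lemma tv_int_bound_nonneg:
  fixes g :: "'a \<Rightarrow> real"
  assumes P: "prob_space P" and R: "prob_space R" and sR: "sets R = sets P"
    and s: "\<forall>A\<in>sets P. \<bar>measure P A - measure R A\<bar> \<le> s"
    and g: "g \<in> borel_measurable P" and gb: "\<forall>x\<in>space P. 0 \<le> g x \<and> g x \<le> C"
  shows "(\<integral>x. g x \<partial>P) - (\<integral>x. g x \<partial>R) \<le> C * s"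
proof -
  interpret P: prob_space P by fact
  interpret R: prob_space R by fact
  have spR: "space R = space P" using sR sets_eq_imp_space_eq by blast
  have gR: "g \<in> borel_measurable R" using g sR measurable_cong_sets by blast
  have C0: "0 \<le> C" using gb P.not_empty by fastforce
  obtain Y where Y: "Y \<in> sets P" and YR: "\<forall>X\<in>sets P. X \<subseteq> Y \<longrightarrow> emeasure R X \<le> emeasure P X"
    and YP: "\<forall>X\<in>sets P. X \<inter> Y = {} \<longrightarrow> emeasure P X \<le> emeasure R X"
    using finite_unsigned_Hahn_decomposition[of P R] sR P.finite_measure_axioms R.finite_measure_axioms by blast
  define Z where "Z = space P - Y"
  have Z: "Z \<in> sets P" unfolding Z_def using Y by auto
  have ZR: "\<forall>X\<in>sets P. X \<subseteq> Z \<longrightarrow> emeasure P X \<le> emeasure R X"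
    using YP unfolding Z_def by auto
  have A: "(\<integral>x. g x * indicator Z x \<partial>P) \<le> (\<integral>x. g x * indicator Z x \<partial>R)"
    by (rule int_mono_on_set[where C=C]) (use R.finite_measure_axioms P.finite_measure_axioms sR Z ZR gR gb spR in auto)
  have B: "(\<integral>x. (C - g x) * indicator Y x \<partial>R) \<le> (\<integral>x. (C - g x) * indicator Y x \<partial>P)"
    by (rule int_mono_on_set[where C=C]) (use R.finite_measure_axioms P.finite_measure_axioms sR Y YR g gb in auto)
  have intg: "integrable M (\<lambda>x. g x * indicator W x)" "integrable M g" "integrable M (\<lambda>x. C * indicator W x)"
    if "M = P \<or> M = R" "W \<in> sets P" for M W
  proof -
    interpret M: finite_measure M using that P.finite_measure_axioms R.finite_measure_axioms by auto
    have sM: "sets M = sets P" "space M = space P" using that sR spR by auto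
    have gM: "g \<in> borel_measurable M" using g sM measurable_cong_sets by blast
    have WM: "W \<in> sets M" using that sM by auto
    show "integrable M (\<lambda>x. g x * indicator W x)"
    proof (rule M.integrable_const_bound[where B="C"])
      show "AE x in M. norm (g x * indicator W x) \<le> C" using gb sM C0 by (fastforce simp: indicator_def intro!: AE_I2)
      show "(\<lambda>x. g x * indicator W x) \<in> borel_measurable M" using gM WM by measurable
    qed
    show "integrable M g"
    proof (rule M.integrable_const_bound[where B="C"])
      show "AE x in M. norm (g x) \<le> C" using gb sM by (fastforce intro!: AE_I2)
    qed (rule gM)
    show "integrable M (\<lambda>x. C * indicator W x)" using WM by (intro integrable_mult_right integrable_real_indicator) (auto simp: M.emeasure_finite less_top[symmetric])
  qed
  have split: "(\<integral>x. g x \<partial>M) = (\<integral>x. g x * indicator Y x \<partial>M) + (\<integral>x. g x * indicator Z x \<partial>M)"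
    if "M = P \<or> M = R" for M
  proof -
    have sM: "space M = space P" using that spR by auto
    have "(\<integral>x. g x \<partial>M) = (\<integral>x. g x * indicator Y x + g x * indicator Z x \<partial>M)"
      using Y sM sets.sets_into_space[OF Y] by (intro Bochner_Integration.integral_cong[OF refl]) (auto simp: Z_def indicator_def)
    also have "\<dots> = (\<integral>x. g x * indicator Y x \<partial>M) + (\<integral>x. g x * indicator Z x \<partial>M)"
      using intg[OF that Y] intg[OF that Z] by (intro Bochner_Integration.integral_add) auto
    finally show ?thesis .
  qed
  have expand: "(\<integral>x. (C - g x) * indicator Y x \<partial>M) = C * measure M Y - (\<integral>x. g x * indicator Y x \<partial>M)"
    if "M = P \<or> M = R" for M
  proof -
    have YM: "Y \<in> sets M" using that sR Y by auto
    have "(\<integral>x. (C - g x) * indicator Y x \<partial>M) = (\<integral>x. C * indicator Y x - g x * indicator Y x \<partial>M)"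
      by (intro Bochner_Integration.integral_cong[OF refl]) (auto simp: algebra_simps)
    also have "\<dots> = (\<integral>x. C * indicator Y x \<partial>M) - (\<integral>x. g x * indicator Y x \<partial>M)"
      using intg[OF that Y] by (intro Bochner_Integration.integral_diff) auto
    also have "(\<integral>x. C * indicator Y x \<partial>M) = C * measure M Y" using YM by simp
    finally show ?thesis .
  qed
  have "(\<integral>x. g x \<partial>P) - (\<integral>x. g x \<partial>R) \<le> C * (measure P Y - measure R Y)"
    using A B split[of P] split[of R] expand[of P] expand[of R] by (simp add: algebra_simps)
  also have "\<dots> \<le> C * s" using s Y C0 by (intro mult_left_mono) auto
  finally show ?thesis .
qed

lemma tv_int_bound:
  fixes f :: "'a \<Rightarrow> real"
  assumes P: "prob_space P" and R: "prob_space R" and sR: "sets R = sets P"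
    and s: "\<forall>A\<in>sets P. \<bar>measure P A - measure R A\<bar> \<le> s"
    and f: "f \<in> borel_measurable P" and fb: "\<forall>x\<in>space P. \<bar>f x\<bar> \<le> B"
  shows "\<bar>(\<integral>x. f x \<partial>P) - (\<integral>x. f x \<partial>R)\<bar> \<le> 2 * B * s"
proof -
  interpret P: prob_space P by fact
  interpret R: prob_space R by fact
  have spR: "space R = space P" using sR sets_eq_imp_space_eq by blast
  have fR: "f \<in> borel_measurable R" using f sR measurable_cong_sets by blast
  let ?g = "\<lambda>x. f x + B"
  have gb: "\<forall>x\<in>space P. 0 \<le> ?g x \<and> ?g x \<le> 2 * B" using fb by (auto simp: abs_le_iff)
  have iP: "integrable P f" using fb f by (intro P.integrable_const_bound[where B=B]) (auto intro!: AE_I2)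
  have iR: "integrable R f" using fb fR spR by (intro R.integrable_const_bound[where B=B]) (auto intro!: AE_I2)
  have eP: "(\<integral>x. ?g x \<partial>P) = (\<integral>x. f x \<partial>P) + B" using iP by (simp add: P.prob_space)
  have eR: "(\<integral>x. ?g x \<partial>R) = (\<integral>x. f x \<partial>R) + B" using iR by (simp add: R.prob_space)
  have 1: "(\<integral>x. ?g x \<partial>P) - (\<integral>x. ?g x \<partial>R) \<le> 2 * B * s"
    by (rule tv_int_bound_nonneg[OF P R sR s _ gb]) (use f in measurable)
  have s': "\<forall>A\<in>sets R. \<bar>measure R A - measure P A\<bar> \<le> s" using s sR by (auto simp: abs_minus_commute)
  have 2: "(\<integral>x. ?g x \<partial>R) - (\<integral>x. ?g x \<partial>P) \<le> 2 * B * s"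
    by (rule tv_int_bound_nonneg[OF R P sR[symmetric] s' _ ]) (use fR gb spR in auto)
  show ?thesis using 1 2 eP eR by (simp add: abs_le_iff)
qed

lemma prob_abs_int_le:
  fixes h :: "'a \<Rightarrow> real"
  assumes "prob_space M" "h \<in> borel_measurable M" "\<forall>x\<in>space M. \<bar>h x\<bar> \<le> C"
  shows "\<bar>\<integral>x. h x \<partial>M\<bar> \<le> C"
proof -
  interpret prob_space M by fact
  have i: "integrable M h" using assms by (intro integrable_const_bound[where B=C]) (auto intro!: AE_I2)
  have "(\<integral>x. h x \<partial>M) \<le> C" using assms i by (intro integral_le_const) (auto intro!: AE_I2 simp: abs_le_iff)
  moreover have "-C \<le> (\<integral>x. h x \<partial>M)" using assms i by (intro integral_ge_const) (auto intro!: AE_I2 simp: abs_le_iff)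
  ultimately show ?thesis by auto
qed

lemma prob_integrable_bound:
  fixes h :: "'a \<Rightarrow> real"
  assumes "prob_space M" "h \<in> borel_measurable M" "\<forall>x\<in>space M. \<bar>h x\<bar> \<le> C"
  shows "integrable M h"
proof -
  interpret prob_space M by fact
  show ?thesis using assms by (intro integrable_const_bound[where B=C]) (auto intro!: AE_I2)
qed

lemma prod_tv_int_bound:
  fixes f :: "('i \<Rightarrow> 'y) \<Rightarrow> real"
  assumes I: "finite I"
    and P: "\<forall>i. prob_space (P i) \<and> sets (P i) = sets (N i)"
    and R: "\<forall>i. prob_space (R i) \<and> sets (R i) = sets (N i)"
    and s: "\<forall>i\<in>I. \<forall>A\<in>sets (N i). \<bar>measure (P i) A - measure (R i) A\<bar> \<le> s i"
    and f: "f \<in> borel_measurable (PiM I N)" and fb: "\<forall>x\<in>space (PiM I N). \<bar>f x\<bar> \<le> B"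
  shows "\<bar>(\<integral>x. f x \<partial>PiM I P) - (\<integral>x. f x \<partial>PiM I R)\<bar> \<le> 2 * B * (\<Sum>i\<in>I. s i)"
  using I s f fb
proof (induction I arbitrary: f rule: finite_induct)
  case empty
  have "(\<lambda>_. undefined) \<in> space (PiM {} N)" by (simp add: space_PiM_empty)
  then have "B \<ge> 0" using empty.prems(3) by (meson abs_ge_zero order_trans)
  then show ?case by (simp add: PiM_empty)
next
  case (insert i I)
  have PPl: "product_sigma_finite P" unfolding product_sigma_finite_def using P prob_space_imp_sigma_finite by blast
  have RRl: "product_sigma_finite R" unfolding product_sigma_finite_def using R prob_space_imp_sigma_finite by blast
  have Pi: "prob_space (P i)" "sets (P i) = sets (N i)" using P by auto
  have Ri: "prob_space (R i)" "sets (R i) = sets (N i)" using R by auto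
  have sPI: "sets (PiM J P) = sets (PiM J N)" for J using P by (intro sets_PiM_cong) auto
  have sRI: "sets (PiM J R) = sets (PiM J N)" for J using R by (intro sets_PiM_cong) auto
  have spPI: "space (PiM J P) = space (PiM J N)" for J using sPI sets_eq_imp_space_eq by blast
  have spRI: "space (PiM J R) = space (PiM J N)" for J using sRI sets_eq_imp_space_eq by blast
  have probPI: "prob_space (PiM J P)" if "finite J" for J
    using P that by (intro prob_space_PiM) auto
  have probRI: "prob_space (PiM J R)" if "finite J" for J
    using R that by (intro prob_space_PiM) auto
  note f = insert.prems(2) and fb = insert.prems(3)
  have fadd: "(\<lambda>(w, y). f (w(i := y))) \<in> borel_measurable (PiM I N \<Otimes>\<^sub>M N i)"
    using measurable_comp[OF measurable_add_dim f] by (simp add: comp_def case_prod_beta')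
  have addsp: "w(i := y) \<in> space (PiM (insert i I) N)" if "w \<in> space (PiM I N)" "y \<in> space (N i)" for w y
    using that by (auto simp: space_PiM PiE_iff extensional_def)
  have fy: "(\<lambda>y. f (w(i := y))) \<in> borel_measurable (N i)" if "w \<in> space (PiM I N)" for w
    using measurable_Pair2[OF fadd that] by simp
  define FP where "FP w = (\<integral>y. f (w(i := y)) \<partial>P i)" for w
  define FR where "FR w = (\<integral>y. f (w(i := y)) \<partial>R i)" for w
  have FPm: "FP \<in> borel_measurable (PiM I N)"
  proof -
    interpret Ps: sigma_finite_measure "P i" using Pi prob_space_imp_sigma_finite by blast
    have "(\<lambda>(w, y). f (w(i := y))) \<in> borel_measurable (PiM I N \<Otimes>\<^sub>M P i)"
      using fadd Pi by (subst measurable_cong_sets[OF sets_pair_measure_cong[OF refl Pi(2)] refl])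
    then show ?thesis unfolding FP_def by (rule Ps.borel_measurable_lebesgue_integral)
  qed
  have FRm: "FR \<in> borel_measurable (PiM I N)"
  proof -
    interpret Rs: sigma_finite_measure "R i" using Ri prob_space_imp_sigma_finite by blast
    have "(\<lambda>(w, y). f (w(i := y))) \<in> borel_measurable (PiM I N \<Otimes>\<^sub>M R i)"
      using fadd Ri by (subst measurable_cong_sets[OF sets_pair_measure_cong[OF refl Ri(2)] refl])
    then show ?thesis unfolding FR_def by (rule Rs.borel_measurable_lebesgue_integral)
  qed
  have FRb: "\<forall>w\<in>space (PiM I N). \<bar>FR w\<bar> \<le> B"
  proof
    fix w assume w: "w \<in> space (PiM I N)"
    show "\<bar>FR w\<bar> \<le> B" unfolding FR_def
    proof (rule prob_abs_int_le[OF Ri(1)])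
      have sR: "space (R i) = space (N i)" using Ri sets_eq_imp_space_eq by blast
      show "(\<lambda>y. f (w(i := y))) \<in> borel_measurable (R i)" using fy[OF w] Ri measurable_cong_sets by blast
      show "\<forall>y\<in>space (R i). \<bar>f (w(i := y))\<bar> \<le> B" using fb addsp w sR by auto
    qed
  qed
  have diff: "\<forall>w\<in>space (PiM I N). \<bar>FP w - FR w\<bar> \<le> 2 * B * s i"
  proof
    fix w assume w: "w \<in> space (PiM I N)"
    have sP: "space (P i) = space (N i)" using Pi sets_eq_imp_space_eq by blast
    show "\<bar>FP w - FR w\<bar> \<le> 2 * B * s i" unfolding FP_def FR_def
    proof (rule tv_int_bound[OF Pi(1) Ri(1)])
      show "sets (R i) = sets (P i)" using Pi Ri by simp
      show "\<forall>A\<in>sets (P i). \<bar>measure (P i) A - measure (R i) A\<bar> \<le> s i" using insert.prems(1) Pi by auto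
      show "(\<lambda>y. f (w(i := y))) \<in> borel_measurable (P i)" using fy[OF w] Pi measurable_cong_sets by blast
      show "\<forall>y\<in>space (P i). \<bar>f (w(i := y))\<bar> \<le> B" using fb addsp w sP by auto
    qed
  qed
  have fP: "integrable (PiM (insert i I) P) f"
  proof (rule prob_integrable_bound[OF probPI])
    show "f \<in> borel_measurable (PiM (insert i I) P)" using f sPI measurable_cong_sets by blast
  qed (use insert.hyps fb spPI in auto)
  have fR: "integrable (PiM (insert i I) R) f"
  proof (rule prob_integrable_bound[OF probRI])
    show "f \<in> borel_measurable (PiM (insert i I) R)" using f sRI measurable_cong_sets by blast
  qed (use insert.hyps fb spRI in auto)
  have eP: "(\<integral>x. f x \<partial>PiM (insert i I) P) = (\<integral>w. FP w \<partial>PiM I P)"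
    unfolding FP_def by (rule product_sigma_finite.product_integral_insert[OF PPl insert.hyps fP])
  have eR: "(\<integral>x. f x \<partial>PiM (insert i I) R) = (\<integral>w. FR w \<partial>PiM I R)"
    unfolding FR_def by (rule product_sigma_finite.product_integral_insert[OF RRl insert.hyps fR])
  have FPmP: "FP \<in> borel_measurable (PiM I P)" using FPm sPI measurable_cong_sets by blast
  have FRmP: "FR \<in> borel_measurable (PiM I P)" using FRm sPI measurable_cong_sets by blast
  have 1: "\<bar>(\<integral>w. FP w \<partial>PiM I P) - (\<integral>w. FR w \<partial>PiM I P)\<bar> \<le> 2 * B * s i"
  proof -
    have "(\<integral>w. FP w \<partial>PiM I P) - (\<integral>w. FR w \<partial>PiM I P) = (\<integral>w. FP w - FR w \<partial>PiM I P)"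
    proof (rule Bochner_Integration.integral_diff[symmetric])
      show "integrable (PiM I P) FP"
      proof (rule prob_integrable_bound[OF probPI[OF insert.hyps(1)] FPmP])
        show "\<forall>x\<in>space (PiM I P). \<bar>FP x\<bar> \<le> B + 2 * B * s i" using diff FRb spPI by (force simp: abs_le_iff)
      qed
      show "integrable (PiM I P) FR"
        by (rule prob_integrable_bound[OF probPI[OF insert.hyps(1)] FRmP]) (use FRb spPI in auto)
    qed
    also have "\<bar>\<dots>\<bar> \<le> 2 * B * s i"
      by (rule prob_abs_int_le[OF probPI[OF insert.hyps(1)]]) (use FPmP FRmP diff spPI in auto)
    finally show ?thesis .
  qed
  have 2: "\<bar>(\<integral>w. FR w \<partial>PiM I P) - (\<integral>w. FR w \<partial>PiM I R)\<bar> \<le> 2 * B * (\<Sum>i\<in>I. s i)"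
    by (rule insert.IH) (use insert.prems FRm FRb in auto)
  have "(\<Sum>i\<in>insert i I. s i) = s i + (\<Sum>i\<in>I. s i)" using insert.hyps by simp
  then show ?case unfolding eP eR using 1 2 by (simp add: distrib_left abs_le_iff)
qed

lemma cont_bdd_integrable:
  fixes h :: "'x::topological_space \<Rightarrow> real"
  assumes "prob_space \<nu>" "sets \<nu> = sets borel" "continuous_on UNIV h" "\<forall>x. \<bar>h x\<bar> \<le> C"
  shows "integrable \<nu> h"
proof (rule prob_integrable_bound[OF assms(1)])
  show "h \<in> borel_measurable \<nu>" using borel_measurable_continuous_onI[OF assms(3)] assms(2) measurable_cong_sets by blast
qed (use assms(4) in auto)

lemma unif_weak_conv:
  fixes g :: "'p \<Rightarrow> 'x::{metric_space, second_countable_topology} \<Rightarrow> real"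
  assumes \<mu>s: "\<forall>m. prob_space (\<mu>s m) \<and> sets (\<mu>s m) = sets borel"
    and \<mu>: "prob_space \<mu>" "sets \<mu> = sets borel"
    and conv: "weak_conv_seq \<mu>s \<mu>"
    and meas: "\<forall>\<gamma>\<in>\<Gamma>. g \<gamma> \<in> borel_measurable borel"
    and bnd: "\<forall>\<gamma>\<in>\<Gamma>. \<forall>x. \<bar>g \<gamma> x\<bar> \<le> B"
    and equi: "\<forall>x. \<forall>e>0. \<exists>d>0. \<forall>y. dist y x < d \<longrightarrow> (\<forall>\<gamma>\<in>\<Gamma>. \<bar>g \<gamma> y - g \<gamma> x\<bar> \<le> e)"
    and B0: "B \<ge> 0"
    and eps: "\<epsilon> > 0"
  shows "eventually (\<lambda>m. \<forall>\<gamma>\<in>\<Gamma>. \<bar>(\<integral>x. g \<gamma> x \<partial>\<mu>s m) - (\<integral>x. g \<gamma> x \<partial>\<mu>)\<bar> \<le> \<epsilon>) sequentially"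
proof -
  define e where "e = \<epsilon> / 4"
  have e0: "e > 0" using eps by (simp add: e_def)
  obtain \<delta> where \<delta>: "\<And>x. \<delta> x > 0" "\<And>x y \<gamma>. dist y x < \<delta> x \<Longrightarrow> \<gamma> \<in> \<Gamma> \<Longrightarrow> \<bar>g \<gamma> y - g \<gamma> x\<bar> \<le> e"
  proof -
    have "\<forall>x. \<exists>d. d > 0 \<and> (\<forall>y. \<forall>\<gamma>\<in>\<Gamma>. dist y x < d \<longrightarrow> \<bar>g \<gamma> y - g \<gamma> x\<bar> \<le> e)"
      using equi e0 by blast
    from choice[OF this] obtain d where "\<forall>x. d x > 0 \<and> (\<forall>y. \<forall>\<gamma>\<in>\<Gamma>. dist y x < d x \<longrightarrow> \<bar>g \<gamma> y - g \<gamma> x\<bar> \<le> e)"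
      by blast
    then show ?thesis using that by blast
  qed
  obtain \<F> where F: "\<F> \<subseteq> (\<lambda>x. ball x (\<delta> x / 2)) ` UNIV" "countable \<F>" "\<Union>\<F> = \<Union>((\<lambda>x. ball x (\<delta> x / 2)) ` UNIV)"
    by (rule Lindelof[of "(\<lambda>x. ball x (\<delta> x / 2)) ` UNIV"]) auto
  obtain C where C: "countable C" "\<F> = (\<lambda>x. ball x (\<delta> x / 2)) ` C"
    using F(1,2) countable_subset_image[of \<F> "\<lambda>x. ball x (\<delta> x / 2)" UNIV] by blast
  have cover: "\<exists>c\<in>C. dist c y < \<delta> c / 2" for y
  proof -
    have "y \<in> ball y (\<delta> y / 2)" using \<delta>(1)[of y] by simp
    then have "y \<in> \<Union>\<F>" using F(3) by blast
    then show ?thesis using C(2) by auto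
  qed
  have Cne: "C \<noteq> {}" using cover by blast
  define ce where "ce = from_nat_into C"
  have ce_range: "range ce = C" using Cne C(1) unfolding ce_def by simp
  have cover': "\<exists>k. dist y (ce k) < \<delta> (ce k) / 2" for y
    using cover[of y] ce_range by (metis dist_commute rangeE)
  define \<psi> where "\<psi> k y = min 1 (max 0 (2 - 2 * dist y (ce k) / \<delta> (ce k)))" for k y
  have \<psi>01: "0 \<le> \<psi> k y \<and> \<psi> k y \<le> 1" for k y unfolding \<psi>_def by auto
  have \<psi>pos: "dist y (ce k) < \<delta> (ce k)" if "\<psi> k y > 0" for k y
  proof (rule ccontr)
    assume "\<not> ?thesis"
    then have "2 * dist y (ce k) / \<delta> (ce k) \<ge> 2" using \<delta>(1)[of "ce k"] by (simp add: field_simps)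
    then show False using that unfolding \<psi>_def by auto
  qed
  have \<psi>one: "\<psi> k y = 1" if "dist y (ce k) < \<delta> (ce k) / 2" for k y
  proof -
    have "2 * dist y (ce k) / \<delta> (ce k) < 1" using that \<delta>(1)[of "ce k"] by (simp add: field_simps)
    then show ?thesis unfolding \<psi>_def by auto
  qed
  have \<psi>cont: "continuous_on UNIV (\<psi> k)" for k
    unfolding \<psi>_def by (intro continuous_intros) (use \<delta>(1) in \<open>auto simp: less_irrefl\<close>, metis less_irrefl)
  define Rf where "Rf N y = (\<Prod>k<N. 1 - \<psi> k y)" for N y
  define \<phi> where "\<phi> k y = \<psi> k y * Rf k y" for k y
  have Rf01: "0 \<le> Rf N y \<and> Rf N y \<le> 1" for N y
    unfolding Rf_def using \<psi>01 by (auto intro!: prod_nonneg prod_le_1)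
  have \<phi>0: "0 \<le> \<phi> k y" for k y unfolding \<phi>_def using \<psi>01 Rf01 by auto
  have sum_id: "(\<Sum>k<N. \<phi> k y) + Rf N y = 1" for N y
    by (induction N) (auto simp: Rf_def \<phi>_def algebra_simps)
  have Rf_cont: "continuous_on UNIV (Rf N)" for N
    unfolding Rf_def by (intro continuous_intros \<psi>cont)
  have \<phi>_cont: "continuous_on UNIV (\<phi> k)" for k
    unfolding \<phi>_def by (intro continuous_intros \<psi>cont Rf_cont)
  have \<phi>1: "\<phi> k y \<le> 1" for k y unfolding \<phi>_def using \<psi>01 Rf01 by (simp add: mult_le_one)
  have Rf_zero: "eventually (\<lambda>N. Rf N y = 0) sequentially" for y
  proof -
    obtain k where k: "dist y (ce k) < \<delta> (ce k) / 2" using cover' by blast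
    have "Rf N y = 0" if "N \<ge> Suc k" for N
      unfolding Rf_def using that \<psi>one[OF k] by (intro prod_zero) auto
    then show ?thesis unfolding eventually_sequentially by blast
  qed
  have pw: "\<bar>g \<gamma> y - (\<Sum>k<N. \<phi> k y * g \<gamma> (ce k))\<bar> \<le> e + B * Rf N y" if "\<gamma> \<in> \<Gamma>" for \<gamma> y N
  proof -
    have "g \<gamma> y = (\<Sum>k<N. \<phi> k y * g \<gamma> y) + Rf N y * g \<gamma> y"
      using sum_id[where N=N and y=y] by (metis mult_1 distrib_right sum_distrib_right)
    then have eq: "g \<gamma> y - (\<Sum>k<N. \<phi> k y * g \<gamma> (ce k)) = (\<Sum>k<N. \<phi> k y * (g \<gamma> y - g \<gamma> (ce k))) + Rf N y * g \<gamma> y"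
      by (simp add: sum_subtractf right_diff_distrib)
    have trm: "\<bar>\<phi> k y * (g \<gamma> y - g \<gamma> (ce k))\<bar> \<le> \<phi> k y * e" for k
    proof (cases "\<phi> k y = 0")
      case False
      then have "\<psi> k y > 0" using \<psi>01[where k=k and y=y] unfolding \<phi>_def by (metis less_eq_real_def mult_eq_0_iff)
      then have "\<bar>g \<gamma> y - g \<gamma> (ce k)\<bar> \<le> e" using \<psi>pos \<delta>(2) that by blast
      then show ?thesis using \<phi>0[where k=k and y=y] by (simp add: abs_mult mult_left_mono)
    qed simp
    have "\<bar>\<Sum>k<N. \<phi> k y * (g \<gamma> y - g \<gamma> (ce k))\<bar> \<le> (\<Sum>k<N. \<phi> k y * e)"
      by (rule order_trans[OF sum_abs sum_mono]) (use trm in auto)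
    also have "\<dots> = e * (\<Sum>k<N. \<phi> k y)" by (simp add: sum_distrib_left mult.commute)
    also have "\<dots> \<le> e" using sum_id[where N=N and y=y] Rf01[where N=N and y=y] e0 by (simp add: mult_left_le)
    finally have 1: "\<bar>\<Sum>k<N. \<phi> k y * (g \<gamma> y - g \<gamma> (ce k))\<bar> \<le> e" .
    have 2: "\<bar>Rf N y * g \<gamma> y\<bar> \<le> B * Rf N y"
      using bnd that Rf01[where N=N and y=y] by (simp add: abs_mult mult.commute[of B] mult_left_mono)
    show ?thesis unfolding eq using 1 2 by (meson abs_triangle_ineq add_mono order_trans)
  qed
  have intapprox: "\<bar>(\<integral>x. g \<gamma> x \<partial>\<nu>) - (\<Sum>k<N. g \<gamma> (ce k) * (\<integral>x. \<phi> k x \<partial>\<nu>))\<bar> \<le> e + B * (\<integral>x. Rf N x \<partial>\<nu>)"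
    if \<nu>: "prob_space \<nu>" "sets \<nu> = sets borel" and \<gamma>: "\<gamma> \<in> \<Gamma>" for \<nu> \<gamma> N
  proof -
    interpret \<nu>: prob_space \<nu> by fact
    have i\<phi>: "integrable \<nu> (\<phi> k)" for k
      by (rule cont_bdd_integrable[OF \<nu> \<phi>_cont, where C=1]) (use \<phi>0 \<phi>1 in auto)
    have iRf: "integrable \<nu> (Rf N)"
      by (rule cont_bdd_integrable[OF \<nu> Rf_cont, where C=1]) (use Rf01 in auto)
    have gm: "g \<gamma> \<in> borel_measurable \<nu>" using meas \<gamma> \<nu>(2) measurable_cong_sets by blast
    have ig: "integrable \<nu> (g \<gamma>)" by (rule prob_integrable_bound[OF \<nu>(1) gm]) (use bnd \<gamma> in auto)
    have iA: "integrable \<nu> (\<lambda>y. \<Sum>k<N. \<phi> k y * g \<gamma> (ce k))" using i\<phi> by auto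
    have eA: "(\<integral>y. (\<Sum>k<N. \<phi> k y * g \<gamma> (ce k)) \<partial>\<nu>) = (\<Sum>k<N. g \<gamma> (ce k) * (\<integral>x. \<phi> k x \<partial>\<nu>))"
      using i\<phi> by (simp add: mult.commute)
    have "\<bar>(\<integral>x. g \<gamma> x \<partial>\<nu>) - (\<integral>y. (\<Sum>k<N. \<phi> k y * g \<gamma> (ce k)) \<partial>\<nu>)\<bar>
        = \<bar>\<integral>y. g \<gamma> y - (\<Sum>k<N. \<phi> k y * g \<gamma> (ce k)) \<partial>\<nu>\<bar>"
      using ig iA by (subst Bochner_Integration.integral_diff) auto
    also have "\<dots> \<le> (\<integral>y. \<bar>g \<gamma> y - (\<Sum>k<N. \<phi> k y * g \<gamma> (ce k))\<bar> \<partial>\<nu>)"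
      by (rule integral_abs_bound)
    also have "\<dots> \<le> (\<integral>y. e + B * Rf N y \<partial>\<nu>)"
      using ig iA iRf pw[OF \<gamma>] by (intro integral_mono) auto
    also have "\<dots> = e + B * (\<integral>x. Rf N x \<partial>\<nu>)" using iRf by (simp add: \<nu>.prob_space)
    finally show ?thesis unfolding eA .
  qed
  define \<eta> where "\<eta> = \<epsilon> / (8 * (B + 1))"
  have \<eta>0: "\<eta> > 0" using eps B0 by (simp add: \<eta>_def)
  have "(\<lambda>N. \<integral>x. Rf N x \<partial>\<mu>) \<longlonglongrightarrow> (\<integral>x. 0 \<partial>\<mu>)"
  proof (rule integral_dominated_convergence[where w="\<lambda>_. 1"])
    show "(\<lambda>x. 0::real) \<in> borel_measurable \<mu>" by simp
    show "Rf N \<in> borel_measurable \<mu>" for N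
      using borel_measurable_continuous_onI[OF Rf_cont] \<mu>(2) measurable_cong_sets by blast
    show "integrable \<mu> (\<lambda>_. 1::real)" using \<mu>(1) finite_measure.integrable_const prob_space.axioms(1) by blast
    show "AE x in \<mu>. (\<lambda>N. Rf N x) \<longlonglongrightarrow> 0"
      using Rf_zero by (intro AE_I2) (simp add: tendsto_eventually)
    show "AE x in \<mu>. norm (Rf N x) \<le> 1" for N using Rf01 by (intro AE_I2) auto
  qed
  then have "eventually (\<lambda>N. (\<integral>x. Rf N x \<partial>\<mu>) < \<eta>) sequentially"
    using \<eta>0 by (simp add: order_tendstoD(2))
  then obtain N where N: "(\<integral>x. Rf N x \<partial>\<mu>) < \<eta>" by (meson eventually_sequentially order_refl)
  have bddRf: "bounded (range (Rf N))" using Rf01 by (intro boundedI[where B=1]) auto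
  have bdd\<phi>: "bounded (range (\<phi> k))" for k using \<phi>0 \<phi>1 by (intro boundedI[where B=1]) auto
  have cRf: "(\<lambda>m. \<integral>x. Rf N x \<partial>\<mu>s m) \<longlonglongrightarrow> (\<integral>x. Rf N x \<partial>\<mu>)"
    using conv Rf_cont bddRf unfolding weak_conv_seq_def by blast
  have c\<phi>: "(\<lambda>m. \<integral>x. \<phi> k x \<partial>\<mu>s m) \<longlonglongrightarrow> (\<integral>x. \<phi> k x \<partial>\<mu>)" for k
    using conv \<phi>_cont bdd\<phi> unfolding weak_conv_seq_def by blast
  define \<eta>' where "\<eta>' = \<eta> / (real N + 1)"
  have \<eta>'0: "\<eta>' > 0" using \<eta>0 by (simp add: \<eta>'_def)
  have ev1: "eventually (\<lambda>m. (\<integral>x. Rf N x \<partial>\<mu>s m) < \<eta>) sequentially"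
    using cRf N by (simp add: order_tendstoD(2))
  have ev2: "eventually (\<lambda>m. \<forall>k\<in>{..<N}. \<bar>(\<integral>x. \<phi> k x \<partial>\<mu>s m) - (\<integral>x. \<phi> k x \<partial>\<mu>)\<bar> < \<eta>') sequentially"
  proof (rule eventually_ball_finite)
    show "\<forall>k\<in>{..<N}. eventually (\<lambda>m. \<bar>(\<integral>x. \<phi> k x \<partial>\<mu>s m) - (\<integral>x. \<phi> k x \<partial>\<mu>)\<bar> < \<eta>') sequentially"
    proof
      fix k
      have "(\<lambda>m. (\<integral>x. \<phi> k x \<partial>\<mu>s m) - (\<integral>x. \<phi> k x \<partial>\<mu>)) \<longlonglongrightarrow> 0"
        using c\<phi>[of k] by (simp add: LIM_zero)
      then show "eventually (\<lambda>m. \<bar>(\<integral>x. \<phi> k x \<partial>\<mu>s m) - (\<integral>x. \<phi> k x \<partial>\<mu>)\<bar> < \<eta>') sequentially"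
        using \<eta>'0 by (simp add: tendsto_iff dist_real_def)
    qed
  qed simp
  show ?thesis
    using ev1 ev2
  proof eventually_elim
    case (elim m)
    show ?case
    proof
      fix \<gamma> assume \<gamma>: "\<gamma> \<in> \<Gamma>"
      define Am where "Am = (\<Sum>k<N. g \<gamma> (ce k) * (\<integral>x. \<phi> k x \<partial>\<mu>s m))"
      define A where "A = (\<Sum>k<N. g \<gamma> (ce k) * (\<integral>x. \<phi> k x \<partial>\<mu>))"
      have 1: "\<bar>(\<integral>x. g \<gamma> x \<partial>\<mu>s m) - Am\<bar> \<le> e + B * \<eta>"
      proof -
        have "\<bar>(\<integral>x. g \<gamma> x \<partial>\<mu>s m) - Am\<bar> \<le> e + B * (\<integral>x. Rf N x \<partial>\<mu>s m)"
          unfolding Am_def using \<mu>s \<gamma> by (intro intapprox) auto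
        also have "\<dots> \<le> e + B * \<eta>" using elim(1) B0 by (simp add: mult_left_mono)
        finally show ?thesis .
      qed
      have 2: "\<bar>(\<integral>x. g \<gamma> x \<partial>\<mu>) - A\<bar> \<le> e + B * \<eta>"
      proof -
        have "\<bar>(\<integral>x. g \<gamma> x \<partial>\<mu>) - A\<bar> \<le> e + B * (\<integral>x. Rf N x \<partial>\<mu>)"
          unfolding A_def using \<mu> \<gamma> by (intro intapprox) auto
        also have "\<dots> \<le> e + B * \<eta>" using N B0 by (simp add: mult_left_mono)
        finally show ?thesis .
      qed
      have 3: "\<bar>Am - A\<bar> \<le> B * \<eta>"
      proof -
        have "\<bar>Am - A\<bar> = \<bar>\<Sum>k<N. g \<gamma> (ce k) * ((\<integral>x. \<phi> k x \<partial>\<mu>s m) - (\<integral>x. \<phi> k x \<partial>\<mu>))\<bar>"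
          unfolding Am_def A_def by (simp add: sum_subtractf right_diff_distrib)
        also have "\<dots> \<le> (\<Sum>k<N. B * \<eta>')"
        proof (rule order_trans[OF sum_abs sum_mono])
          fix k assume k: "k \<in> {..<N}"
          have "\<bar>g \<gamma> (ce k)\<bar> \<le> B" using bnd \<gamma> by auto
          then show "\<bar>g \<gamma> (ce k) * ((\<integral>x. \<phi> k x \<partial>\<mu>s m) - (\<integral>x. \<phi> k x \<partial>\<mu>))\<bar> \<le> B * \<eta>'"
            using elim(2) k B0 unfolding abs_mult by (intro mult_mono) (auto simp: less_imp_le)
        qed
        also have "\<dots> = B * (real N * \<eta>')" by simp
        also have "\<dots> \<le> B * \<eta>"
          using B0 \<eta>0 by (intro mult_left_mono) (auto simp: \<eta>'_def field_simps)
        finally show ?thesis .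
      qed
      have X: "\<bar>(\<integral>x. g \<gamma> x \<partial>\<mu>s m) - (\<integral>x. g \<gamma> x \<partial>\<mu>)\<bar> \<le> 2 * e + 3 * (B * \<eta>)"
        using 1 2 3 by (simp add: abs_le_iff)
      have Y: "B * \<eta> \<le> \<epsilon> / 8"
        using B0 eps by (simp add: \<eta>_def field_simps)
      show "\<bar>(\<integral>x. g \<gamma> x \<partial>\<mu>s m) - (\<integral>x. g \<gamma> x \<partial>\<mu>)\<bar> \<le> \<epsilon>"
        using X Y unfolding e_def by linarith
    qed
  qed
qed

lemma kernel_prod_measurable:
  assumes I: "finite I" and K: "\<forall>i. K i \<in> M \<rightarrow>\<^sub>M prob_algebra (N i)"
  shows "(\<lambda>x. PiM I (\<lambda>i. K i x)) \<in> M \<rightarrow>\<^sub>M prob_algebra (PiM I N)"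
proof (rule measurable_prob_algebra_generated[OF sets_PiM Int_stable_prod_algebra prod_algebra_sets_into_space])
  fix a assume a: "a \<in> space M"
  have Ka: "sets (K i a) = sets (N i) \<and> prob_space (K i a)" for i
  proof -
    have "K i a \<in> space (prob_algebra (N i))" using measurable_space[OF K[rule_format, of i] a] .
    then show ?thesis unfolding space_prob_algebra by blast
  qed
  show "prob_space (PiM I (\<lambda>i. K i a))" using Ka by (intro prob_space_PiM) blast
  show "sets (PiM I (\<lambda>i. K i a)) = sets (PiM I N)" by (rule sets_PiM_cong) (use Ka in blast)+
next
  fix A assume A0: "A \<in> prod_algebra I N"
  have "\<exists>X. A = PiE I X \<and> X \<in> (\<Pi> j\<in>I. sets (N j))"
    using A0 unfolding prod_algebra_eq_finite[OF I] mem_Collect_eq by metis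
  then obtain X where A: "A = PiE I X" and X: "X \<in> (\<Pi> j\<in>I. sets (N j))"
    by metis
  have eq: "emeasure (PiM I (\<lambda>i. K i a)) A = (\<Prod>i\<in>I. emeasure (K i a) (X i))" if a: "a \<in> space M" for a
  proof -
    have Ka: "sets (K i a) = sets (N i) \<and> prob_space (K i a)" for i
    proof -
      have "K i a \<in> space (prob_algebra (N i))" using measurable_space[OF K[rule_format, of i] a] .
      then show ?thesis unfolding space_prob_algebra by blast
    qed
    have "product_sigma_finite (\<lambda>i. K i a)"
      unfolding product_sigma_finite_def using Ka prob_space_imp_sigma_finite by blast
    moreover have "\<And>i. i \<in> I \<Longrightarrow> X i \<in> sets (K i a)" using X Ka by blast
    ultimately show ?thesis unfolding A by (rule product_sigma_finite.emeasure_PiM[OF _ I])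
  qed
  have "(\<lambda>a. \<Prod>i\<in>I. emeasure (K i a) (X i)) \<in> borel_measurable M"
  proof (intro borel_measurable_prod_ennreal)
    fix i assume "i \<in> I"
    then have Xi: "X i \<in> sets (N i)" using X by (simp add: Pi_iff)
    have "(\<lambda>a. emeasure a (X i)) \<in> borel_measurable (subprob_algebra (N i))"
      using measurable_emeasure_subprob_algebra[OF Xi] .
    from measurable_compose[OF measurable_prob_algebraD[OF K[rule_format, of i]] this]
    show "(\<lambda>a. emeasure (K i a) (X i)) \<in> borel_measurable M" .
  qed
  then show "(\<lambda>a. emeasure (PiM I (\<lambda>i. K i a)) A) \<in> borel_measurable M"
    using eq by (subst measurable_cong) auto
qed
lemma unif_c:
  fixes c :: "'x::metric_space \<Rightarrow> 'k::first_countable_topology \<Rightarrow> real"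
  assumes K: "compact K" and cc: "continuous_on (UNIV \<times> K) (\<lambda>p. c (fst p) (snd p))"
    and xs: "xs \<longlonglongrightarrow> x" and e: "e > 0"
  shows "eventually (\<lambda>m. \<forall>u\<in>K. \<bar>c (xs m) u - c x u\<bar> \<le> e) sequentially"
proof (rule ccontr)
  assume neg: "\<not> ?thesis"
  define S where "S = {m. \<exists>u\<in>K. \<bar>c (xs m) u - c x u\<bar> > e}"
  have "infinite S"
  proof -
    have "\<forall>N. \<exists>m\<ge>N. m \<in> S" using neg unfolding eventually_sequentially S_def by (auto simp: not_le)
    then show ?thesis using infinite_nat_iff_unbounded_le by blast
  qed
  then obtain r :: "nat \<Rightarrow> nat" where r: "strict_mono r" "\<forall>m. r m \<in> S" using infinite_enumerate by blast
  then have "\<forall>m. \<exists>u. u \<in> K \<and> \<bar>c (xs (r m)) u - c x u\<bar> > e" unfolding S_def by blast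
  then obtain u where u: "\<forall>m. u m \<in> K" "\<forall>m. \<bar>c (xs (r m)) (u m) - c x (u m)\<bar> > e" by metis
  obtain l s where l: "l \<in> K" "strict_mono (s :: nat \<Rightarrow> nat)" "(u \<circ> s) \<longlonglongrightarrow> l"
    using seq_compactE[OF compact_imp_seq_compact[OF K] u(1)] by blast
  have xr: "(\<lambda>m. xs (r (s m))) \<longlonglongrightarrow> x"
    using LIMSEQ_subseq_LIMSEQ[OF LIMSEQ_subseq_LIMSEQ[OF xs r(1)] l(2)] by (simp add: comp_def)
  have 1: "(\<lambda>m. c (xs (r (s m))) (u (s m))) \<longlonglongrightarrow> c x l"
  proof -
    have "((\<lambda>m. (xs (r (s m)), u (s m))) \<longlongrightarrow> (x, l)) sequentially"
      using xr l(3) by (intro tendsto_Pair) (auto simp: comp_def)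
    from continuous_on_tendsto_compose[OF cc this] show ?thesis using l u(1) by auto
  qed
  have 2: "(\<lambda>m. c x (u (s m))) \<longlonglongrightarrow> c x l"
  proof -
    have "((\<lambda>m. (x, u (s m))) \<longlongrightarrow> (x, l)) sequentially"
      using l(3) by (intro tendsto_Pair) (auto simp: comp_def)
    from continuous_on_tendsto_compose[OF cc this] show ?thesis using l u(1) by auto
  qed
  have "(\<lambda>m. c (xs (r (s m))) (u (s m)) - c x (u (s m))) \<longlonglongrightarrow> 0"
    using tendsto_diff[OF 1 2] by simp
  then have "eventually (\<lambda>m. \<bar>c (xs (r (s m))) (u (s m)) - c x (u (s m))\<bar> < e) sequentially"
    using e by (simp add: tendsto_iff dist_real_def)
  then obtain m where "\<bar>c (xs (r (s m))) (u (s m)) - c x (u (s m))\<bar> < e"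
    by (meson eventually_sequentially order_refl)
  then show False using u(2) by (meson not_less_iff_gr_or_eq order_less_trans)
qed

lemma closed_PiE_lessThan:
  fixes U :: "nat \<Rightarrow> 'u::metric_space set"
  assumes A4: "\<forall>i<n. compact (U i)"
  shows "closed (PiE {..<n} U)"
proof -
  define V where "V i = (if i < n then U i else {undefined})" for i
  have cV: "closed (V i)" for i unfolding V_def using A4 compact_imp_closed by auto
  have eq: "PiE {..<n} U = (\<Inter>i. (\<lambda>f. f i) -` V i)"
  proof (rule set_eqI)
    fix x :: "nat \<Rightarrow> 'u"
    have "x \<in> PiE {..<n} U \<longleftrightarrow> (\<forall>i. x i \<in> V i)"
    proof -
      have 1: "x \<in> PiE {..<n} U \<longleftrightarrow> (\<forall>i. (i < n \<longrightarrow> x i \<in> U i) \<and> (\<not> i < n \<longrightarrow> x i = undefined))"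
        by (simp add: PiE_iff extensional_def all_conj_distrib lessThan_iff Ball_def)
      have 2: "x i \<in> V i \<longleftrightarrow> (i < n \<longrightarrow> x i \<in> U i) \<and> (\<not> i < n \<longrightarrow> x i = undefined)" for i
        by (simp add: V_def)
      show ?thesis using 1 2 by presburger
    qed
    then show "x \<in> PiE {..<n} U \<longleftrightarrow> x \<in> (\<Inter>i. (\<lambda>f. f i) -` V i)" by simp
  qed
  have "closed ((\<lambda>f::nat \<Rightarrow> 'u. f i) -` V i)" for i
    by (rule continuous_closed_vimage[OF cV]) (use continuous_on_eq_continuous_at[of UNIV "\<lambda>f::nat \<Rightarrow> 'u. f i"] in simp)
  then show ?thesis unfolding eq by (intro closed_INT) auto
qed

lemma compact_PiE_lessThan:
  fixes U :: "nat \<Rightarrow> 'u::metric_space set"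
  assumes A4: "\<forall>i<n. compact (U i)"
  shows "compact (PiE {..<n} U)"
proof -
  define V where "V i = (if i < n then U i else {undefined})" for i
  have eq: "PiE {..<n} U = PiE UNIV V"
  proof (rule set_eqI)
    fix x :: "nat \<Rightarrow> 'u"
    have "x \<in> PiE {..<n} U \<longleftrightarrow> (\<forall>i. x i \<in> V i)"
    proof -
      have 1: "x \<in> PiE {..<n} U \<longleftrightarrow> (\<forall>i. (i < n \<longrightarrow> x i \<in> U i) \<and> (\<not> i < n \<longrightarrow> x i = undefined))"
        by (simp add: PiE_iff extensional_def all_conj_distrib lessThan_iff Ball_def)
      have 2: "x i \<in> V i \<longleftrightarrow> (i < n \<longrightarrow> x i \<in> U i) \<and> (\<not> i < n \<longrightarrow> x i = undefined)" for i
        by (simp add: V_def)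
      show ?thesis using 1 2 by presburger
    qed
    then show "x \<in> PiE {..<n} U \<longleftrightarrow> x \<in> PiE UNIV V" by (simp add: PiE_iff)
  qed
  have "compactin (product_topology (\<lambda>i. euclidean) UNIV) (PiE UNIV V)"
    unfolding compactin_PiE using A4 by (auto simp: V_def)
  then show ?thesis unfolding eq euclidean_product_topology by simp
qed

lemma integrand_meas:
  fixes U :: "nat \<Rightarrow> 'u::polish_space set" and c :: "'x::polish_space \<Rightarrow> (nat \<Rightarrow> 'u) \<Rightarrow> real"
    and \<gamma> :: "nat \<Rightarrow> 'y::polish_space \<Rightarrow> 'u"
  assumes A4: "\<forall>i<n. compact (U i)"
    and A2_cont: "continuous_on (UNIV \<times> PiE {..<n} U) (\<lambda>p. c (fst p) (snd p))"
    and \<gamma>: "\<gamma> \<in> team_policies n U"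
    and M: "sets M = sets borel"
  shows "(\<lambda>p. c (fst p) (\<lambda>i\<in>{..<n}. \<gamma> i (snd p i))) \<in> borel_measurable (M \<Otimes>\<^sub>M obs_space n)"
proof -
  define S where "S = (UNIV :: 'x set) \<times> PiE {..<n} U"
  have Sc: "closed S" unfolding S_def using closed_PiE_lessThan[OF A4] by (intro closed_Times) auto
  have c': "(\<lambda>q. indicator S q *\<^sub>R c (fst q) (snd q)) \<in> borel_measurable borel"
    using borel_measurable_continuous_on_indicator[OF borel_closed[OF Sc]] A2_cont unfolding S_def by blast
  define \<Gamma> where "\<Gamma> y = (\<lambda>i\<in>{..<n}. \<gamma> i (y i))" for y :: "nat \<Rightarrow> 'y"
  have fstm: "fst \<in> (M \<Otimes>\<^sub>M obs_space n) \<rightarrow>\<^sub>M borel"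
    using measurable_fst[of M "obs_space n"] measurable_cong_sets[OF refl M] by blast
  have \<Gamma>m: "(\<lambda>p. \<Gamma> (snd p)) \<in> borel_measurable (M \<Otimes>\<^sub>M obs_space n)"
  proof (rule measurable_coordinatewise_then_product)
    fix i
    show "(\<lambda>p. \<Gamma> (snd p) i) \<in> borel_measurable (M \<Otimes>\<^sub>M obs_space n)"
    proof (cases "i < n")
      case True
      have gi: "\<gamma> i \<in> borel \<rightarrow>\<^sub>M borel" using \<gamma> True unfolding team_policies_def by blast
      have "(\<lambda>p. snd p i) \<in> (M \<Otimes>\<^sub>M obs_space n) \<rightarrow>\<^sub>M borel"
        using measurable_compose[OF measurable_snd measurable_component_singleton[of i "{..<n}" "\<lambda>_. borel"]] True
        unfolding obs_space_def by (simp add: comp_def)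
      from measurable_compose[OF this gi] show ?thesis using True unfolding \<Gamma>_def by simp
    next
      case False
      then show ?thesis unfolding \<Gamma>_def by simp
    qed
  qed
  have \<Phi>m: "(\<lambda>p. (fst p, \<Gamma> (snd p))) \<in> borel_measurable (M \<Otimes>\<^sub>M obs_space n)"
    using fstm \<Gamma>m by (intro borel_measurable_Pair) auto
  have comp: "(\<lambda>p. indicator S (fst p, \<Gamma> (snd p)) *\<^sub>R c (fst p) (\<Gamma> (snd p))) \<in> borel_measurable (M \<Otimes>\<^sub>M obs_space n)"
    using measurable_compose[OF \<Phi>m c'] by simp
  have inS: "(fst p, \<Gamma> (snd p)) \<in> S" for p
    using \<gamma> unfolding S_def \<Gamma>_def team_policies_def by auto
  show ?thesis
    using comp inS unfolding \<Gamma>_def[symmetric] by simp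
qed

lemma team_cost_eq:
  fixes U :: "nat \<Rightarrow> 'u::polish_space set" and c :: "'x::polish_space \<Rightarrow> (nat \<Rightarrow> 'u) \<Rightarrow> real"
    and \<gamma> :: "nat \<Rightarrow> 'y::polish_space \<Rightarrow> 'u" and Q :: "nat \<Rightarrow> 'x \<Rightarrow> 'y measure"
  assumes A4: "\<forall>i<n. compact (U i)"
    and A2_cont: "continuous_on (UNIV \<times> PiE {..<n} U) (\<lambda>p. c (fst p) (snd p))"
    and Bc: "\<forall>x. \<forall>u\<in>PiE {..<n} U. \<bar>c x u\<bar> \<le> B"
    and kernel: "\<forall>i<n. Q i \<in> borel \<rightarrow>\<^sub>M prob_algebra borel"
    and \<zeta>: "prob_space \<zeta>" "sets \<zeta> = sets borel"
    and \<gamma>: "\<gamma> \<in> team_policies n U"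
  shows "team_cost n c (info_struct n Q \<zeta>) \<gamma> =
    (\<integral>x. (\<integral>y. c x (\<lambda>i\<in>{..<n}. \<gamma> i (y i)) \<partial>PiM {..<n} (\<lambda>i. Q i x)) \<partial>\<zeta>)"
proof -
  define Q' where "Q' i = (if i < n then Q i else (\<lambda>_. return borel undefined))" for i
  have Q'm: "\<forall>i. Q' i \<in> borel \<rightarrow>\<^sub>M prob_algebra (borel :: 'y measure)"
  proof
    fix i
    show "Q' i \<in> borel \<rightarrow>\<^sub>M prob_algebra borel"
    proof (cases "i < n")
      case True then show ?thesis using kernel unfolding Q'_def by simp
    next
      case False
      have "return borel undefined \<in> space (prob_algebra (borel :: 'y measure))"
        unfolding space_prob_algebra by (auto intro: prob_space_return)
      then show ?thesis using False unfolding Q'_def by (simp add: measurable_const)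
    qed
  qed
  define P where "P x = PiM {..<n} (\<lambda>i. Q i x)" for x
  have PQ': "P x = PiM {..<n} (\<lambda>i. Q' i x)" for x
    unfolding P_def Q'_def by (intro PiM_cong) auto
  have Pm0: "P \<in> borel \<rightarrow>\<^sub>M prob_algebra (obs_space n)"
    unfolding PQ' obs_space_def by (rule kernel_prod_measurable[OF _ Q'm]) simp
  have Pm: "P \<in> \<zeta> \<rightarrow>\<^sub>M subprob_algebra (obs_space n)"
    using measurable_prob_algebraD[OF Pm0] measurable_cong_sets[OF \<zeta>(2) refl] by blast
  define Kk where "Kk x = distr (P x) (\<zeta> \<Otimes>\<^sub>M obs_space n) (\<lambda>y. (x, y))" for x
  have idm: "(\<lambda>(x, y). (x, y)) \<in> (\<zeta> \<Otimes>\<^sub>M obs_space n) \<rightarrow>\<^sub>M (\<zeta> \<Otimes>\<^sub>M obs_space n)"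
    by simp
  have Km: "Kk \<in> \<zeta> \<rightarrow>\<^sub>M subprob_algebra (\<zeta> \<Otimes>\<^sub>M obs_space n)"
    unfolding Kk_def by (rule measurable_distr2[OF idm Pm])
  have info: "info_struct n Q \<zeta> = \<zeta> \<bind> Kk"
    unfolding info_struct_def Kk_def P_def ..
  define H where "H p = c (fst p) (\<lambda>i\<in>{..<n}. \<gamma> i (snd p i))" for p :: "'x \<times> (nat \<Rightarrow> 'y)"
  have Hm: "H \<in> borel_measurable (\<zeta> \<Otimes>\<^sub>M obs_space n)"
    unfolding H_def by (rule integrand_meas[OF A4 A2_cont \<gamma> \<zeta>(2)])
  have inPi: "(\<lambda>i\<in>{..<n}. \<gamma> i (y i)) \<in> PiE {..<n} U" for y :: "nat \<Rightarrow> 'y"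
    using \<gamma> unfolding team_policies_def by auto
  have Hb: "\<bar>H p\<bar> \<le> B" for p unfolding H_def using Bc inPi by blast
  have Kb: "AE x in \<zeta>. emeasure (Kk x) (space (Kk x)) \<le> ennreal 1"
  proof (rule AE_I2)
    fix x assume x: "x \<in> space \<zeta>"
    have "subprob_space (Kk x)" using measurable_space[OF Km x] by (simp add: space_subprob_algebra)
    then show "emeasure (Kk x) (space (Kk x)) \<le> ennreal 1"
      using subprob_space.subprob_emeasure_le_1 by simp
  qed
  have "team_cost n c (info_struct n Q \<zeta>) \<gamma> = integral\<^sup>L (\<zeta> \<bind> Kk) H"
    unfolding team_cost_def info H_def ..
  also have "\<dots> = (\<integral>x. integral\<^sup>L (Kk x) H \<partial>\<zeta>)"
    by (rule integral_bind[OF Hm _ Km _ Kb]) (use Hb \<zeta>(1) prob_space.finite_measure in auto)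
  also have "\<dots> = (\<integral>x. (\<integral>y. c x (\<lambda>i\<in>{..<n}. \<gamma> i (y i)) \<partial>P x) \<partial>\<zeta>)"
  proof (rule Bochner_Integration.integral_cong[OF refl])
    fix x assume x: "x \<in> space \<zeta>"
    have sP: "sets (P x) = sets (obs_space n)"
      using measurable_space[OF Pm x] by (simp add: space_subprob_algebra)
    have "Pair x \<in> measurable (P x) (\<zeta> \<Otimes>\<^sub>M obs_space n)"
      using measurable_Pair1'[OF x, of "obs_space n"] measurable_cong_sets[OF sP refl] by blast
    then show "integral\<^sup>L (Kk x) H = (\<integral>y. c x (\<lambda>i\<in>{..<n}. \<gamma> i (y i)) \<partial>P x)"
      unfolding Kk_def H_def using Hm unfolding H_def by (subst integral_distr) auto
  qed
  finally show ?thesis unfolding P_def .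
qed

context
  fixes n :: nat and U :: "nat \<Rightarrow> 'u::polish_space set"
    and c :: "'x::polish_space \<Rightarrow> (nat \<Rightarrow> 'u) \<Rightarrow> real"
    and Q :: "nat \<Rightarrow> 'x \<Rightarrow> 'y::polish_space measure" and B :: real
  assumes A4: "\<forall>i<n. compact (U i)"
    and A2_cont: "continuous_on (UNIV \<times> PiE {..<n} U) (\<lambda>p. c (fst p) (snd p))"
    and Bc: "\<forall>x. \<forall>u\<in>PiE {..<n} U. \<bar>c x u\<bar> \<le> B"
    and kernel: "\<forall>i<n. Q i \<in> borel \<rightarrow>\<^sub>M prob_algebra borel"
    and A6: "\<forall>i<n. \<forall>x xs. xs \<longlonglongrightarrow> x \<longrightarrow> (\<lambda>m. tv_dist (Q i (xs m)) (Q i x)) \<longlonglongrightarrow> 0"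
begin

lemma Q_facts: "i < n \<Longrightarrow> prob_space (Q i x) \<and> sets (Q i x) = sets borel"
  using measurable_space[OF kernel[rule_format], of i x] by (simp add: space_prob_algebra)

lemma Pk_facts: "prob_space (PiM {..<n} (\<lambda>i. Q i x)) \<and> sets (PiM {..<n} (\<lambda>i. Q i x)) = sets (obs_space n)"
proof
  show "prob_space (PiM {..<n} (\<lambda>i. Q i x))" using Q_facts by (intro prob_space_PiM) blast
  show "sets (PiM {..<n} (\<lambda>i. Q i x)) = sets (obs_space n)"
    unfolding obs_space_def by (rule sets_PiM_cong) (use Q_facts in blast)+
qed

lemma sec_meas:
  fixes \<gamma> :: "nat \<Rightarrow> 'y \<Rightarrow> 'u"
  assumes \<gamma>: "\<gamma> \<in> team_policies n U"
  shows "(\<lambda>y. c x (\<lambda>i\<in>{..<n}. \<gamma> i (y i))) \<in> borel_measurable (obs_space n)"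
proof -
  have "(\<lambda>p. c (fst p) (\<lambda>i\<in>{..<n}. \<gamma> i (snd p i))) \<in> borel_measurable (borel \<Otimes>\<^sub>M obs_space n)"
    by (rule integrand_meas[OF A4 A2_cont \<gamma>]) simp
  from measurable_Pair2[OF this, of x] show ?thesis by simp
qed

lemma sec_meas':
  fixes \<gamma> :: "nat \<Rightarrow> 'y \<Rightarrow> 'u"
  assumes \<gamma>: "\<gamma> \<in> team_policies n U"
  shows "(\<lambda>y. c x (\<lambda>i\<in>{..<n}. \<gamma> i (y i))) \<in> borel_measurable (PiM {..<n} (\<lambda>i. Q i x'))"
  using sec_meas[OF \<gamma>] Pk_facts measurable_cong_sets by blast

lemma inPi: "\<gamma> \<in> team_policies n U \<Longrightarrow> (\<lambda>i\<in>{..<n}. \<gamma> i (y i)) \<in> PiE {..<n} U"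
  unfolding team_policies_def by auto

lemma cbound: "\<gamma> \<in> team_policies n U \<Longrightarrow> \<bar>c z (\<lambda>i\<in>{..<n}. \<gamma> i (y i))\<bar> \<le> B"
  using Bc inPi by blast

lemma g_bound:
  assumes \<gamma>: "\<gamma> \<in> team_policies n U"
  shows "\<bar>\<integral>y. c x (\<lambda>i\<in>{..<n}. \<gamma> i (y i)) \<partial>PiM {..<n} (\<lambda>i. Q i x)\<bar> \<le> B"
  by (rule prob_abs_int_le) (use Pk_facts sec_meas'[OF \<gamma>] cbound[OF \<gamma>] in auto)

lemma tv_le:
  assumes i: "i < n" and A: "A \<in> sets borel"
  shows "\<bar>measure (Q i x') A - measure (Q i x) A\<bar> \<le> tv_dist (Q i x') (Q i x) / 2"
proof -
  have f: "prob_space (Q i x')" "sets (Q i x') = sets borel" "prob_space (Q i x)" using Q_facts i by auto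
  have b: "bdd_above ((\<lambda>B. \<bar>measure (Q i x') B - measure (Q i x) B\<bar>) ` sets (Q i x'))"
  proof (rule bdd_aboveI2[where M=1])
    fix Z
    have "measure (Q i x') Z \<le> 1" "measure (Q i x) Z \<le> 1"
      using f prob_space.prob_le_1 by blast+
    moreover have "0 \<le> measure (Q i x') Z" "0 \<le> measure (Q i x) Z" by auto
    ultimately show "\<bar>measure (Q i x') Z - measure (Q i x) Z\<bar> \<le> 1" unfolding abs_le_iff by linarith
  qed
  have "\<bar>measure (Q i x') A - measure (Q i x) A\<bar> \<le> (SUP B\<in>sets (Q i x'). \<bar>measure (Q i x') B - measure (Q i x) B\<bar>)"
    using A f(2) by (intro cSUP_upper[OF _ b]) auto
  then show ?thesis unfolding tv_dist_def by simp
qed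

lemma g_diff:
  assumes \<gamma>: "\<gamma> \<in> team_policies n U" and \<eta>: "\<forall>u\<in>PiE {..<n} U. \<bar>c x' u - c x u\<bar> \<le> \<eta>"
  shows "\<bar>(\<integral>y. c x' (\<lambda>i\<in>{..<n}. \<gamma> i (y i)) \<partial>PiM {..<n} (\<lambda>i. Q i x')) -
          (\<integral>y. c x (\<lambda>i\<in>{..<n}. \<gamma> i (y i)) \<partial>PiM {..<n} (\<lambda>i. Q i x))\<bar>
         \<le> \<eta> + B * (\<Sum>i<n. tv_dist (Q i x') (Q i x))"
proof -
  let ?P' = "PiM {..<n} (\<lambda>i. Q i x')" and ?P = "PiM {..<n} (\<lambda>i. Q i x)"
  let ?f' = "\<lambda>y. c x' (\<lambda>i\<in>{..<n}. \<gamma> i (y i))" and ?f = "\<lambda>y. c x (\<lambda>i\<in>{..<n}. \<gamma> i (y i))"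
  have P'f: "prob_space ?P'" "sets ?P' = sets (obs_space n)" using Pk_facts by auto
  have sp': "space ?P' = space (obs_space n)" using P'f(2) sets_eq_imp_space_eq by blast
  have i1: "integrable ?P' ?f'"
    by (rule prob_integrable_bound[OF P'f(1) sec_meas'[OF \<gamma>]]) (use cbound[OF \<gamma>] in auto)
  have i2: "integrable ?P' ?f"
    by (rule prob_integrable_bound[OF P'f(1) sec_meas'[OF \<gamma>]]) (use cbound[OF \<gamma>] in auto)
  have 1: "\<bar>(\<integral>y. ?f' y \<partial>?P') - (\<integral>y. ?f y \<partial>?P')\<bar> \<le> \<eta>"
  proof -
    have "(\<integral>y. ?f' y \<partial>?P') - (\<integral>y. ?f y \<partial>?P') = (\<integral>y. ?f' y - ?f y \<partial>?P')"
      using i1 i2 by simp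
    also have "\<bar>\<dots>\<bar> \<le> \<eta>"
      by (rule prob_abs_int_le[OF P'f(1)]) (use sec_meas'[OF \<gamma>] \<eta> inPi[OF \<gamma>] in auto)
    finally show ?thesis .
  qed
  define Q' where "Q' z i = (if i < n then Q i z else return (borel :: 'y measure) undefined)" for z i
  have Q'f: "\<forall>i. prob_space (Q' z i) \<and> sets (Q' z i) = sets (borel :: 'y measure)" for z
    unfolding Q'_def using Q_facts by (auto intro: prob_space_return)
  have eqP: "PiM {..<n} (\<lambda>i. Q i z) = PiM {..<n} (Q' z)" for z
    unfolding Q'_def by (intro PiM_cong) auto
  have 2: "\<bar>(\<integral>y. ?f y \<partial>?P') - (\<integral>y. ?f y \<partial>?P)\<bar> \<le> 2 * B * (\<Sum>i<n. tv_dist (Q i x') (Q i x) / 2)"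
    unfolding eqP
  proof (rule prod_tv_int_bound[OF _ Q'f Q'f])
    show "\<forall>i\<in>{..<n}. \<forall>A\<in>sets borel. \<bar>measure (Q' x' i) A - measure (Q' x i) A\<bar> \<le> tv_dist (Q i x') (Q i x) / 2"
      unfolding Q'_def using tv_le by auto
    show "?f \<in> borel_measurable (PiM {..<n} (\<lambda>_. borel))" using sec_meas[OF \<gamma>] unfolding obs_space_def .
    show "\<forall>y\<in>space (PiM {..<n} (\<lambda>_. borel)). \<bar>?f y\<bar> \<le> B" using cbound[OF \<gamma>] by auto
  qed simp
  have 3: "2 * B * (\<Sum>i<n. tv_dist (Q i x') (Q i x) / 2) = B * (\<Sum>i<n. tv_dist (Q i x') (Q i x))"
    by (simp add: sum_divide_distrib[symmetric])
  show ?thesis using 1 2 3 by (simp add: abs_le_iff)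
qed

lemma g_equi:
  "\<forall>x. \<forall>e>0. \<exists>d>0. \<forall>y. dist y x < d \<longrightarrow> (\<forall>\<gamma>\<in>team_policies n U.
     \<bar>(\<integral>w. c y (\<lambda>i\<in>{..<n}. \<gamma> i (w i)) \<partial>PiM {..<n} (\<lambda>i. Q i y)) -
      (\<integral>w. c x (\<lambda>i\<in>{..<n}. \<gamma> i (w i)) \<partial>PiM {..<n} (\<lambda>i. Q i x))\<bar> \<le> e)"
proof (intro allI impI)
  fix x :: 'x and e :: real assume e: "e > 0"
  define P where "P y = (\<forall>\<gamma>\<in>team_policies n U.
     \<bar>(\<integral>w. c y (\<lambda>i\<in>{..<n}. \<gamma> i (w i)) \<partial>PiM {..<n} (\<lambda>i. Q i y)) -
      (\<integral>w. c x (\<lambda>i\<in>{..<n}. \<gamma> i (w i)) \<partial>PiM {..<n} (\<lambda>i. Q i x))\<bar> \<le> e)" for y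
  have "eventually P (at x)"
  proof (rule sequentially_imp_eventually_at, intro allI impI)
    fix xs :: "nat \<Rightarrow> 'x" assume "(\<forall>m. xs m \<noteq> x) \<and> xs \<longlonglongrightarrow> x"
    then have xs: "xs \<longlonglongrightarrow> x" by blast
    have e1: "eventually (\<lambda>m. \<forall>u\<in>PiE {..<n} U. \<bar>c (xs m) u - c x u\<bar> \<le> e / 2) sequentially"
      using unif_c[OF compact_PiE_lessThan[OF A4] A2_cont xs, of "e/2"] e by simp
    have "(\<lambda>m. \<Sum>i<n. tv_dist (Q i (xs m)) (Q i x)) \<longlonglongrightarrow> 0"
      by (rule tendsto_null_sum) (use A6 xs in auto)
    then have "(\<lambda>m. B * (\<Sum>i<n. tv_dist (Q i (xs m)) (Q i x))) \<longlonglongrightarrow> 0"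
      using tendsto_mult_right_zero by blast
    then have e2: "eventually (\<lambda>m. \<bar>B * (\<Sum>i<n. tv_dist (Q i (xs m)) (Q i x))\<bar> < e / 2) sequentially"
    proof -
      have "e / 2 > 0" using e by simp
      from tendstoD[OF \<open>(\<lambda>m. B * (\<Sum>i<n. tv_dist (Q i (xs m)) (Q i x))) \<longlonglongrightarrow> 0\<close> this]
      show ?thesis by (simp add: dist_real_def)
    qed
    show "eventually (\<lambda>m. P (xs m)) sequentially"
      using e1 e2
    proof eventually_elim
      case (elim m)
      show ?case unfolding P_def
      proof
        fix \<gamma> :: "nat \<Rightarrow> 'y \<Rightarrow> 'u" assume \<gamma>: "\<gamma> \<in> team_policies n U"
        have "\<bar>(\<integral>w. c (xs m) (\<lambda>i\<in>{..<n}. \<gamma> i (w i)) \<partial>PiM {..<n} (\<lambda>i. Q i (xs m))) -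
            (\<integral>w. c x (\<lambda>i\<in>{..<n}. \<gamma> i (w i)) \<partial>PiM {..<n} (\<lambda>i. Q i x))\<bar>
            \<le> e / 2 + B * (\<Sum>i<n. tv_dist (Q i (xs m)) (Q i x))"
          by (rule g_diff[OF \<gamma> elim(1)])
        also have "\<dots> \<le> e" using elim(2) by (simp add: abs_less_iff)
        finally show "\<bar>(\<integral>w. c (xs m) (\<lambda>i\<in>{..<n}. \<gamma> i (w i)) \<partial>PiM {..<n} (\<lambda>i. Q i (xs m))) -
            (\<integral>w. c x (\<lambda>i\<in>{..<n}. \<gamma> i (w i)) \<partial>PiM {..<n} (\<lambda>i. Q i x))\<bar> \<le> e" .
      qed
    qed
  qed
  then obtain d where d: "d > 0" "\<forall>y. y \<noteq> x \<and> dist y x < d \<longrightarrow> P y"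
    unfolding eventually_at by auto
  have "P x" unfolding P_def using e by simp
  then show "\<exists>d>0. \<forall>y. dist y x < d \<longrightarrow> P y" using d by metis
qed

end

lemma INF_close:
  fixes a b :: "'p \<Rightarrow> real"
  assumes ne: "S \<noteq> {}" and ba: "\<forall>s\<in>S. \<bar>a s\<bar> \<le> B" and bb: "\<forall>s\<in>S. \<bar>b s\<bar> \<le> B"
    and d: "\<forall>s\<in>S. \<bar>a s - b s\<bar> \<le> e"
  shows "\<bar>(INF s\<in>S. a s) - (INF s\<in>S. b s)\<bar> \<le> e"
proof -
  have bda: "bdd_below (a ` S)" using ba by (intro bdd_belowI2[where m="-B"]) (auto simp: abs_le_iff)
  have bdb: "bdd_below (b ` S)" using bb by (intro bdd_belowI2[where m="-B"]) (auto simp: abs_le_iff)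
  have 1: "(INF s\<in>S. a s) - e \<le> (INF s\<in>S. b s)"
  proof -
    have "(INF s\<in>S. a s) \<le> b s + e" if "s \<in> S" for s
      using cINF_lower[OF bda that] d that by (auto simp: abs_le_iff)
    then have "(INF s\<in>S. a s) - e \<le> b s" if "s \<in> S" for s using that by force
    then show ?thesis using ne by (intro cINF_greatest) auto
  qed
  have 2: "(INF s\<in>S. b s) - e \<le> (INF s\<in>S. a s)"
  proof -
    have "(INF s\<in>S. b s) \<le> a s + e" if "s \<in> S" for s
      using cINF_lower[OF bdb that] d that by (auto simp: abs_le_iff)
    then have "(INF s\<in>S. b s) - e \<le> a s" if "s \<in> S" for s using that by force
    then show ?thesis using ne by (intro cINF_greatest) auto
  qed
  show ?thesis using 1 2 by (simp add: abs_le_iff)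
qed

theorem theorem4p2:
  fixes n :: nat
    and U :: "nat \<Rightarrow> 'u::polish_space set"
    and c :: "'x::polish_space \<Rightarrow> (nat \<Rightarrow> 'u) \<Rightarrow> real"
    and Q :: "nat \<Rightarrow> 'x \<Rightarrow> 'y::polish_space measure"
    and \<zeta> :: "'x measure"
    and \<zeta>s :: "nat \<Rightarrow> 'x measure"
  assumes A4: "\<forall>i<n. compact (U i) \<and> U i \<noteq> {}"
    and A2_cont: "continuous_on (UNIV \<times> PiE {..<n} U) (\<lambda>p. c (fst p) (snd p))"
    and A2_bdd: "\<exists>B. \<forall>x. \<forall>u\<in>PiE {..<n} U. \<bar>c x u\<bar> \<le> B"
    and kernel: "\<forall>i<n. Q i \<in> borel \<rightarrow>\<^sub>M prob_algebra borel"
    and A6: "\<forall>i<n. \<forall>x xs. xs \<longlonglongrightarrow> x \<longrightarrow> (\<lambda>m. tv_dist (Q i (xs m)) (Q i x)) \<longlonglongrightarrow> 0"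
    and prior: "prob_space \<zeta>" "sets \<zeta> = sets borel"
    and priors: "\<forall>m. prob_space (\<zeta>s m) \<and> sets (\<zeta>s m) = sets borel"
    and A3: "assumption_A3 n Q \<zeta>" "\<forall>m. assumption_A3 n Q (\<zeta>s m)"
    and conv: "weak_conv_seq \<zeta>s \<zeta>"
  shows "(\<lambda>m. team_value n U c (info_struct n Q (\<zeta>s m))) \<longlonglongrightarrow> team_value n U c (info_struct n Q \<zeta>)"
proof -
  obtain B where Bc: "\<forall>x. \<forall>u\<in>PiE {..<n} U. \<bar>c x u\<bar> \<le> B" using A2_bdd by blast
  have A4c: "\<forall>i<n. compact (U i)" using A4 by blast
  define pol where "pol = (team_policies n U :: (nat \<Rightarrow> 'y \<Rightarrow> 'u) set)"
  define g where "g \<gamma> z = (\<integral>w. c z (\<lambda>i\<in>{..<n}. \<gamma> i (w i)) \<partial>PiM {..<n} (\<lambda>i. Q i z))"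
    for \<gamma> :: "nat \<Rightarrow> 'y \<Rightarrow> 'u" and z
  define \<gamma>0 where "\<gamma>0 = (\<lambda>(i::nat) (y::'y). SOME u. u \<in> U i)"
  have \<gamma>0: "\<gamma>0 \<in> pol"
    unfolding pol_def team_policies_def \<gamma>0_def using A4 by (auto intro: some_in_eq[THEN iffD2])
  have ne: "pol \<noteq> {}" using \<gamma>0 by blast
  have B0: "B \<ge> 0"
  proof -
    have "(\<lambda>i\<in>{..<n}. \<gamma>0 i undefined) \<in> PiE {..<n} U"
      using \<gamma>0 inPi unfolding pol_def team_policies_def by auto
    then show ?thesis using Bc by (meson abs_ge_zero order_trans)
  qed
  have gb: "\<forall>\<gamma>\<in>pol. \<forall>x. \<bar>g \<gamma> x\<bar> \<le> B"
    unfolding g_def pol_def using g_bound[OF A4c A2_cont Bc kernel A6] by blast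
  have equi: "\<forall>x. \<forall>e>0. \<exists>d>0. \<forall>y. dist y x < d \<longrightarrow> (\<forall>\<gamma>\<in>pol. \<bar>g \<gamma> y - g \<gamma> x\<bar> \<le> e)"
    unfolding g_def pol_def using g_equi[OF A4c A2_cont Bc kernel A6] by blast
  have gm: "\<forall>\<gamma>\<in>pol. g \<gamma> \<in> borel_measurable borel"
  proof
    fix \<gamma> assume \<gamma>: "\<gamma> \<in> pol"
    have "continuous_on UNIV (g \<gamma>)"
      unfolding continuous_on_iff
    proof (intro ballI allI impI)
      fix x :: 'x and e :: real assume "e > 0"
      then obtain d where "d > 0" "\<forall>y. dist y x < d \<longrightarrow> (\<forall>\<gamma>\<in>pol. \<bar>g \<gamma> y - g \<gamma> x\<bar> \<le> e / 2)"
        using equi half_gt_zero by blast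
      then have "\<forall>x'\<in>UNIV. dist x' x < d \<longrightarrow> dist (g \<gamma> x') (g \<gamma> x) < e"
        using \<gamma> \<open>e > 0\<close> unfolding dist_real_def by (smt (verit, best) field_sum_of_halves)
      then show "\<exists>d>0. \<forall>x'\<in>UNIV. dist x' x < d \<longrightarrow> dist (g \<gamma> x') (g \<gamma> x) < e"
        using \<open>d > 0\<close> by blast
    qed
    then show "g \<gamma> \<in> borel_measurable borel" by (rule borel_measurable_continuous_onI)
  qed
  have tv: "team_value n U c (info_struct n Q \<nu>) = (INF \<gamma>\<in>pol. \<integral>x. g \<gamma> x \<partial>\<nu>)"
    if "prob_space \<nu>" "sets \<nu> = sets borel" for \<nu>
    unfolding team_value_def pol_def g_def
    by (rule INF_cong[OF refl], rule team_cost_eq[OF A4c A2_cont Bc kernel that])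
  have ib: "\<forall>\<gamma>\<in>pol. \<bar>\<integral>x. g \<gamma> x \<partial>\<nu>\<bar> \<le> B" if "prob_space \<nu>" "sets \<nu> = sets borel" for \<nu>
  proof
    fix \<gamma> assume \<gamma>: "\<gamma> \<in> pol"
    show "\<bar>\<integral>x. g \<gamma> x \<partial>\<nu>\<bar> \<le> B"
      by (rule prob_abs_int_le[OF that(1)]) (use gm gb \<gamma> that(2) measurable_cong_sets in auto)
  qed
  show ?thesis
    unfolding tv[OF prior] tv[OF priors[rule_format, THEN conjunct1] priors[rule_format, THEN conjunct2]]
  proof (rule tendstoI)
    fix \<epsilon> :: real assume \<epsilon>: "\<epsilon> > 0"
    have "eventually (\<lambda>m. \<forall>\<gamma>\<in>pol. \<bar>(\<integral>x. g \<gamma> x \<partial>\<zeta>s m) - (\<integral>x. g \<gamma> x \<partial>\<zeta>)\<bar> \<le> \<epsilon> / 2) sequentially"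
      by (rule unif_weak_conv[OF priors prior conv gm gb equi B0]) (use \<epsilon> in simp)
    then show "eventually (\<lambda>m. dist (INF \<gamma>\<in>pol. \<integral>x. g \<gamma> x \<partial>\<zeta>s m) (INF \<gamma>\<in>pol. \<integral>x. g \<gamma> x \<partial>\<zeta>) < \<epsilon>) sequentially"
    proof eventually_elim
      case (elim m)
      have "\<bar>(INF \<gamma>\<in>pol. \<integral>x. g \<gamma> x \<partial>\<zeta>s m) - (INF \<gamma>\<in>pol. \<integral>x. g \<gamma> x \<partial>\<zeta>)\<bar> \<le> \<epsilon> / 2"
        by (rule INF_close[OF ne ib ib elim]) (use priors prior in auto)
      then show ?case using \<epsilon> by (simp add: dist_real_def)
    qed
  qed
qed

end
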